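(* Let $X$, $\Sigma$, $A$, $\#$, $X^\#$ and $A'$ be as follows: $X$ and $\Sigma$ are finite alphabets; $A$ is a finite automaton with state set $Q$, start state, final states, and edges labelled by pairs $(y, a)$ with $y \in \{\epsilon\} \cup X \cup \{x^{-1} : x \in X\}$ and $a \in \Sigma \cup \{\epsilon\}$; $\#$ is a new symbol not in $X$ and $X^\# = X \cup \{\#\}$; $A'$ has state set $Q_+ \cup Q_-$ (two disjoint copies $q_+, q_-$ of each $q \in Q$), start state $q_+$ for $q$ the start state of $A$, final states $q_-$ for $q$ final in $A$, an edge $p_+ \to q_+$ labelled $(x\#, a)$ whenever $A$ has an edge $p \to q$ labelled $(x,a)$ with $x \in X$, an edge $p_- \to q_+$ labelled $(x^{-1}\#, a)$ whenever $A$ has an edge $p \to q$ labelled $(x^{-1},a)$ with $x \in X$, an edge $p_+ \to q_+$ labelled $(\epsilon,a)$ whenever $A$ has an edge $p \to q$ labelled $(\epsilon, a)$, an edge $q_+ \to q_-$ labelled $(\epsilon,\epsilon)$ for each $q \in Q$, and a loop at $q_-$ labelled $(\#^{-1},\epsilon)$ for each $q \in Q$. Regard $A$ and $A'$ as ordinary finite automata over the free monoids $\overline{X}^* \times \Sigma^*$ and $(\overline{X^\#})^* \times \Sigma^*$ respectively. Then for $x \in (\overline{X^\#})^*$ and $w \in \Sigma^*$, the automaton $A'$ accepts $(x, w)$ if and only if there exists a word $y \in \overline{X}^*$ such that $x$ is a permissible padding of $y$ and $(y, w)$ is accepted by $A$.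
   Context: For an alphabet $Y$, $\overline{Y} = \{y, y^{-1} : y \in Y\}$, treated as an alphabet of formal symbols; letters of $Y$ are positive generators and letters $y^{-1}$ negative generators. A finite automaton over a monoid $N$ (edges labelled by elements of $N$) accepts an element $n \in N$ if some path from the start state to a final state has label (product of edge labels) $n$. Permissible padding: for $w = w_1 \cdots w_n$ with $w_i \in \overline{X}$, a permissible padding of $w$ is a word $x_1 x_2 \cdots x_n (\#^{-1})^k$ with $k \geq 0$, where $x_i = (\#^{-1})^{m_i} w_i \#$ for some $m_i \geq 0$ if $w_i$ is a negative generator, and $x_i = w_i \#$ if $w_i$ is a positive generator. *)

theory Defs
  imports Main
begin

datatype 'a gen = Pos 'a | Neg 'a

fun base :: "'a gen \<Rightarrow> 'a" where
  "base (Pos a) = a" | "base (Neg a) = a"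

datatype 'x hsym = Sym 'x | Hash

fun opt2list :: "'a option \<Rightarrow> 'a list" where
  "opt2list None = []" | "opt2list (Some a) = [a]"

inductive path :: "('q \<times> ('s list \<times> 'c list) \<times> 'q) set \<Rightarrow> 'q \<Rightarrow> 's list \<times> 'c list \<Rightarrow> 'q \<Rightarrow> bool"
  for E where
  path_nil: "path E p ([], []) p"
| path_step: "(p, (u1, w1), r) \<in> E \<Longrightarrow> path E r (u2, w2) q \<Longrightarrow> path E p (u1 @ u2, w1 @ w2) q"

definition accepts :: "('q \<times> ('s list \<times> 'c list) \<times> 'q) set \<Rightarrow> 'q \<Rightarrow> 'q set \<Rightarrow> 's list \<times> 'c list \<Rightarrow> bool" where
  "accepts E s F uw \<longleftrightarrow> (\<exists>f\<in>F. path E s uw f)"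

text \<open>The automaton A has edges labelled (y, a) with y in {eps} + overline(X) (None = eps)
  and a in Sigma + {eps} (None = eps). Viewed as an automaton over overline(X)^* x Sigma^*:\<close>
definition monoid_edges :: "('q \<times> ('x gen option \<times> 'c option) \<times> 'q) set \<Rightarrow> ('q \<times> ('x gen list \<times> 'c list) \<times> 'q) set" where
  "monoid_edges E = {(p, (opt2list y, opt2list a), q) | p y a q. (p, (y, a), q) \<in> E}"

text \<open>The automaton A'. States are pairs (q, True) = q_+ and (q, False) = q_-.\<close>
definition A'_edges :: "'q set \<Rightarrow> ('q \<times> ('x gen option \<times> 'c option) \<times> 'q) set
    \<Rightarrow> (('q \<times> bool) \<times> ('x hsym gen list \<times> 'c list) \<times> ('q \<times> bool)) set" where
  "A'_edges Q E =
     {((p, True), ([Pos (Sym x), Pos Hash], opt2list a), (q, True)) | p x a q. (p, (Some (Pos x), a), q) \<in> E}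
   \<union> {((p, False), ([Neg (Sym x), Pos Hash], opt2list a), (q, True)) | p x a q. (p, (Some (Neg x), a), q) \<in> E}
   \<union> {((p, True), ([], opt2list a), (q, True)) | p a q. (p, (None, a), q) \<in> E}
   \<union> {((q, True), ([], []), (q, False)) | q. q \<in> Q}
   \<union> {((q, False), ([Neg Hash], []), (q, False)) | q. q \<in> Q}"

definition A'_start :: "'q \<Rightarrow> 'q \<times> bool" where
  "A'_start q0 = (q0, True)"

definition A'_finals :: "'q set \<Rightarrow> ('q \<times> bool) set" where
  "A'_finals F = {(q, False) | q. q \<in> F}"

fun pad_letter :: "nat \<Rightarrow> 'x gen \<Rightarrow> 'x hsym gen list" where
  "pad_letter m (Pos x) = [Pos (Sym x), Pos Hash]"
| "pad_letter m (Neg x) = replicate m (Neg Hash) @ [Neg (Sym x), Pos Hash]"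

definition permissible_padding :: "'x hsym gen list \<Rightarrow> 'x gen list \<Rightarrow> bool" where
  "permissible_padding z w \<longleftrightarrow>
     (\<exists>ms k. length ms = length w \<and> z = concat (map2 pad_letter ms w) @ replicate k (Neg Hash))"

end

theory Submission
  imports Defs
begin

lemma path_step':
  "(p, (u1, w1), r) \<in> E \<Longrightarrow> path E r (u2, w2) q \<Longrightarrow> u = u1 @ u2 \<Longrightarrow> w = w1 @ w2
   \<Longrightarrow> path E p (u, w) q"
  using path_step by metis

lemma path_labels:
  assumes H: "\<forall>(p, (y, a), q) \<in> E. (\<forall>g. y = Some g \<longrightarrow> base g \<in> X)"
  shows "path (monoid_edges E) s uv t \<Longrightarrow> \<forall>g \<in> set (fst uv). base g \<in> X"
proof (induction rule: path.induct)
  case (path_nil p)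
  then show ?case by simp
next
  case (path_step p u1 w1 r u2 w2 q)
  then obtain y a where "(p, (y, a), r) \<in> E" "u1 = opt2list y"
    unfolding monoid_edges_def by blast
  with H have "\<forall>g \<in> set u1. base g \<in> X"
    by (cases y) auto
  with path_step show ?case by auto
qed

lemma loops:
  assumes "q \<in> Q" "path (A'_edges Q E) (q, False) (u, v) t"
  shows "path (A'_edges Q E) (q, False) (replicate m (Neg Hash) @ u, v) t"
proof (induction m)
  case 0
  then show ?case using assms by simp
next
  case (Suc m)
  have "((q, False), ([Neg Hash], []), (q, False)) \<in> A'_edges Q E"
    using assms(1) unfolding A'_edges_def by blast
  from path_step'[OF this Suc] show ?case by simp
qed


lemma eA: "(p, (Some (Pos x), a), q) \<in> E \<Longrightarrow> ((p, True), ([Pos (Sym x), Pos Hash], opt2list a), (q, True)) \<in> A'_edges Q E"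
  unfolding A'_edges_def by blast
lemma eB: "(p, (Some (Neg x), a), q) \<in> E \<Longrightarrow> ((p, False), ([Neg (Sym x), Pos Hash], opt2list a), (q, True)) \<in> A'_edges Q E"
  unfolding A'_edges_def by blast
lemma eC: "(p, (None, a), q) \<in> E \<Longrightarrow> ((p, True), ([], opt2list a), (q, True)) \<in> A'_edges Q E"
  unfolding A'_edges_def by blast
lemma eD: "q \<in> Q \<Longrightarrow> ((q, True), ([], []), (q, False)) \<in> A'_edges Q E"
  unfolding A'_edges_def by blast
lemma mE: "(p, (y, a), q) \<in> E \<Longrightarrow> (p, (opt2list y, opt2list a), q) \<in> monoid_edges E"
  unfolding monoid_edges_def by blast
lemma mE_inv: "(p, (u, w), q) \<in> monoid_edges E \<Longrightarrow> \<exists>y a. (p, (y, a), q) \<in> E \<and> u = opt2list y \<and> w = opt2list a"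
  unfolding monoid_edges_def by blast

lemma fwd:
  assumes H: "\<forall>(p, (y, a), q) \<in> E. p \<in> Q \<and> q \<in> Q"
  shows "path (monoid_edges E) p yv q \<Longrightarrow> q \<in> Q \<Longrightarrow>
    \<forall>ms k. length ms = length (fst yv) \<longrightarrow>
      path (A'_edges Q E) (p, True) (concat (map2 pad_letter ms (fst yv)) @ replicate k (Neg Hash), snd yv) (q, False)"
proof (induction rule: path.induct)
  case (path_nil p)
  have "path (A'_edges Q E) (p, False) (replicate k (Neg Hash) @ [], []) (p, False)" for k
    using loops[OF path_nil(1) path.path_nil] .
  from path.path_step[OF eD[OF path_nil(1)] this]
  have "path (A'_edges Q E) (p, True) (replicate k (Neg Hash), []) (p, False)" for k
    by simp
  then show ?case by simp
next
  case (path_step p u1 w1 r u2 w2 q)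
  obtain y0 a where E: "(p, (y0, a), r) \<in> E" "u1 = opt2list y0" "w1 = opt2list a"
    using mE_inv[OF path_step.hyps(1)] by blast
  have IH: "\<And>ms k. length ms = length u2 \<Longrightarrow>
      path (A'_edges Q E) (r, True) (concat (map2 pad_letter ms u2) @ replicate k (Neg Hash), w2) (q, False)"
    using path_step.IH path_step.prems by simp
  show ?case
  proof (intro allI impI)
    fix ms :: "nat list" and k :: nat assume len: "length ms = length (fst (u1 @ u2, w1 @ w2))"
    show "path (A'_edges Q E) (p, True) (concat (map2 pad_letter ms (fst (u1 @ u2, w1 @ w2))) @ replicate k (Neg Hash), snd (u1 @ u2, w1 @ w2)) (q, False)"
    proof (cases y0)
      case None
      have "length ms = length u2" using len E None by simp
      from path.path_step[OF eC[OF E(1)[unfolded None]] IH[OF this]] show ?thesis using E None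
        by simp
    next
      case (Some g)
      then obtain m ms' where ms: "ms = m # ms'" "length ms' = length u2"
        using len E by (cases ms) auto
      show ?thesis
      proof (cases g)
        case (Pos x)
        from path.path_step[OF eA[OF E(1)[unfolded Some Pos]] IH[OF ms(2)]] show ?thesis
          using E Some Pos ms by simp
      next
        case (Neg x)
        have pQ: "p \<in> Q" using H E(1) by blast
        have "path (A'_edges Q E) (p, False) ([Neg (Sym x), Pos Hash] @ concat (map2 pad_letter ms' u2) @ replicate k (Neg Hash), w1 @ w2) (q, False)"
          using path.path_step[OF eB[OF E(1)[unfolded Some Neg]] IH[OF ms(2)]] E by simp
        from loops[OF pQ this, of m]
        have "path (A'_edges Q E) (p, False) (concat (map2 pad_letter ms (u1 @ u2)) @ replicate k (Neg Hash), w1 @ w2) (q, False)"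
          using E Some Neg ms by simp
        from path.path_step[OF eD[OF pQ] this] show ?thesis by simp
      qed
    qed
  qed
qed


lemma A'_cases:
  "(s, (u, w), t) \<in> A'_edges Q E \<Longrightarrow>
   (\<exists>p x a q. s = (p, True) \<and> u = [Pos (Sym x), Pos Hash] \<and> w = opt2list a \<and> t = (q, True) \<and> (p, (Some (Pos x), a), q) \<in> E) \<or>
   (\<exists>p x a q. s = (p, False) \<and> u = [Neg (Sym x), Pos Hash] \<and> w = opt2list a \<and> t = (q, True) \<and> (p, (Some (Neg x), a), q) \<in> E) \<or>
   (\<exists>p a q. s = (p, True) \<and> u = [] \<and> w = opt2list a \<and> t = (q, True) \<and> (p, (None, a), q) \<in> E) \<or>
   (\<exists>q. s = (q, True) \<and> u = [] \<and> w = [] \<and> t = (q, False)) \<or>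
   (\<exists>q. s = (q, False) \<and> u = [Neg Hash] \<and> w = [] \<and> t = (q, False))"
  unfolding A'_edges_def by blast

definition negstart :: "'x gen list \<Rightarrow> bool" where
  "negstart y \<longleftrightarrow> (case y of [] \<Rightarrow> True | g # _ \<Rightarrow> (case g of Neg _ \<Rightarrow> True | Pos _ \<Rightarrow> False))"

lemma bwd:
  "path (A'_edges Q E) s uv t \<Longrightarrow> \<forall>p b q. s = (p, b) \<longrightarrow> t = (q, False) \<longrightarrow>
    (\<exists>y ms k. length ms = length y \<and> fst uv = concat (map2 pad_letter ms y) @ replicate k (Neg Hash)
       \<and> (\<not> b \<longrightarrow> negstart y) \<and> path (monoid_edges E) p (y, snd uv) q)"
proof (induction rule: path.induct)
  case (path_nil p)
  show ?case
  proof (intro allI impI)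
    fix p' b q assume "p = (p', b)" "p = (q, False)"
    then show "\<exists>y ms k. length ms = length y \<and> fst ([], []) = concat (map2 pad_letter ms y) @ replicate k (Neg Hash)
       \<and> (\<not> b \<longrightarrow> negstart y) \<and> path (monoid_edges E) p' (y, snd ([], [])) q"
      by (intro exI[of _ "[]"] exI[of _ "[]"] exI[of _ 0]) (auto simp: negstart_def intro: path.path_nil)
  qed
next
  case (path_step s u1 w1 r u2 w2 t)
  show ?case
  proof (intro allI impI)
    fix p b q assume s: "s = (p, b)" and t: "t = (q, False)"
    obtain r1 rb where r: "r = (r1, rb)" by (cases r)
    from path_step.IH r t obtain y ms k where
      IH: "length ms = length y" "u2 = concat (map2 pad_letter ms y) @ replicate k (Neg Hash)"
        "\<not> rb \<longrightarrow> negstart y" "path (monoid_edges E) r1 (y, w2) q" by auto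
    from A'_cases[OF path_step.hyps(1)]
    show "\<exists>y ms k. length ms = length y \<and> fst (u1 @ u2, w1 @ w2) = concat (map2 pad_letter ms y) @ replicate k (Neg Hash)
       \<and> (\<not> b \<longrightarrow> negstart y) \<and> path (monoid_edges E) p (y, snd (u1 @ u2, w1 @ w2)) q"
    proof (elim disjE exE conjE)
      fix p' x a q' assume h: "s = (p', True)" "u1 = [Pos (Sym x), Pos Hash]" "w1 = opt2list a" "r = (q', True)"
        "(p', (Some (Pos x), a), q') \<in> E"
      have me: "(p, ([Pos x], w1), r1) \<in> monoid_edges E" using mE[OF h(5)] h s r by simp
      have P: "path (monoid_edges E) p ([Pos x] @ y, w1 @ w2) q" using path.path_step[OF me IH(4)] .
      show ?thesis using h s r IH P
        by (intro exI[of _ "Pos x # y"] exI[of _ "0 # ms"] exI[of _ k]) (simp add: negstart_def)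
    next
      fix p' x a q' assume h: "s = (p', False)" "u1 = [Neg (Sym x), Pos Hash]" "w1 = opt2list a" "r = (q', True)"
        "(p', (Some (Neg x), a), q') \<in> E"
      have me: "(p, ([Neg x], w1), r1) \<in> monoid_edges E" using mE[OF h(5)] h s r by simp
      have P: "path (monoid_edges E) p ([Neg x] @ y, w1 @ w2) q" using path.path_step[OF me IH(4)] .
      show ?thesis using h s r IH P
        by (intro exI[of _ "Neg x # y"] exI[of _ "0 # ms"] exI[of _ k]) (simp add: negstart_def)
    next
      fix p' a q' assume h: "s = (p', True)" "u1 = []" "w1 = opt2list a" "r = (q', True)"
        "(p', (None, a), q') \<in> E"
      have me: "(p, ([], w1), r1) \<in> monoid_edges E" using mE[OF h(5)] h s r by simp
      have P: "path (monoid_edges E) p ([] @ y, w1 @ w2) q" using path.path_step[OF me IH(4)] .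
      show ?thesis using h s r IH P
        by (intro exI[of _ y] exI[of _ ms] exI[of _ k]) simp
    next
      fix q' assume h: "s = (q', True)" "u1 = []" "w1 = []" "r = (q', False)"
      show ?thesis using h s r IH
        by (intro exI[of _ y] exI[of _ ms] exI[of _ k]) simp
    next
      fix q' assume h: "s = (q', False)" "u1 = [Neg Hash]" "w1 = []" "r = (q', False)"
      show ?thesis
      proof (cases y)
        case Nil
        then show ?thesis using h s r IH
          by (intro exI[of _ y] exI[of _ ms] exI[of _ "Suc k"]) (simp add: negstart_def)
      next
        case (Cons g ys)
        with IH h r obtain z where g: "g = Neg z" by (cases g) (auto simp: negstart_def)
        obtain m ms' where ms: "ms = m # ms'" using IH Cons by (cases ms) auto
        show ?thesis using h s r IH Cons g ms
          by (intro exI[of _ y] exI[of _ "Suc m # ms'"] exI[of _ k]) (simp add: negstart_def)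
      qed
    qed
  qed
qed

theorem lemma4p5:
  fixes X :: "'x set" and \<Sigma> :: "'c set" and Q :: "'q set" and q0 :: 'q and F :: "'q set"
    and E :: "('q \<times> ('x gen option \<times> 'c option) \<times> 'q) set"
    and x :: "'x hsym gen list" and w :: "'c list"
  assumes "finite X" and "finite \<Sigma>" and "finite Q" and "finite E"
    and "q0 \<in> Q" and "F \<subseteq> Q"
    and "\<forall>(p, (y, a), q) \<in> E. p \<in> Q \<and> q \<in> Q \<and> (\<forall>g. y = Some g \<longrightarrow> base g \<in> X)
                                 \<and> (\<forall>c. a = Some c \<longrightarrow> c \<in> \<Sigma>)"
    and "\<forall>g \<in> set x. base g \<in> Sym ` X \<union> {Hash}"
    and "set w \<subseteq> \<Sigma>"
  shows "accepts (A'_edges Q E) (A'_start q0) (A'_finals F) (x, w) \<longleftrightarrow>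
         (\<exists>y. (\<forall>g \<in> set y. base g \<in> X) \<and> permissible_padding x y \<and> accepts (monoid_edges E) q0 F (y, w))"
proof
  have HX: "\<forall>(p, (y, a), q) \<in> E. (\<forall>g. y = Some g \<longrightarrow> base g \<in> X)" using assms(7) by blast
  assume "accepts (A'_edges Q E) (A'_start q0) (A'_finals F) (x, w)"
  then obtain q where q: "q \<in> F" "path (A'_edges Q E) (q0, True) (x, w) (q, False)"
    unfolding accepts_def A'_finals_def A'_start_def by blast
  from bwd[OF q(2)] obtain y ms k where
    "length ms = length y" "x = concat (map2 pad_letter ms y) @ replicate k (Neg Hash)"
    "path (monoid_edges E) q0 (y, w) q" by auto
  then show "\<exists>y. (\<forall>g \<in> set y. base g \<in> X) \<and> permissible_padding x y \<and> accepts (monoid_edges E) q0 F (y, w)"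
    using path_labels[OF HX] q(1) unfolding permissible_padding_def accepts_def by fastforce
next
  have HQ: "\<forall>(p, (y, a), q) \<in> E. p \<in> Q \<and> q \<in> Q" using assms(7) by blast
  assume "\<exists>y. (\<forall>g \<in> set y. base g \<in> X) \<and> permissible_padding x y \<and> accepts (monoid_edges E) q0 F (y, w)"
  then obtain y ms k q where h: "length ms = length y" "x = concat (map2 pad_letter ms y) @ replicate k (Neg Hash)"
    "q \<in> F" "path (monoid_edges E) q0 (y, w) q"
    unfolding permissible_padding_def accepts_def by blast
  have "q \<in> Q" using h(3) assms(6) by blast
  from fwd[OF HQ h(4) this] h(1) have "path (A'_edges Q E) (q0, True) (x, w) (q, False)"
    unfolding h(2) by simp
  then show "accepts (A'_edges Q E) (A'_start q0) (A'_finals F) (x, w)"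
    unfolding accepts_def A'_finals_def A'_start_def using h(3) by blast
qed

end
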